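(* Let $\{x^k\}$ be generated by the ABP algorithm described in the context, and assume (A1)–(A7): (A1) $\mathcal F$ is continuously differentiable; (A2) $C$, $Q$ nonempty closed convex, $z_i^*>-\infty$ for each $i$; (A3) each $f_i$ convex; (A4) $\Omega\ne\emptyset$; (A5) $\lambda_k>0$, $\sum\lambda_k=\infty$, $\sum\lambda_k^2<\infty$; (A6) $0<\underline\alpha\le\alpha_k\le\bar\alpha$, $0<\underline\beta\le\beta_k\le\bar\beta$, $0<\underline\gamma\le\gamma_k\le\bar\gamma$ for all $k$; (A7) $\varphi_{\mathrm{lb}}=\varphi^*$. Then there is $\bar M<\infty$ with $\|d^k\|\le\bar M$ for all $k$, and $\mu\le\eta_k\le\bar\eta:=\max(\mu,\bar M)$ for all $k$.
   Context: Let $n,m\ge1$, $\mathcal F=(f_1,\dots,f_m)\colon\mathbb R^n\to\mathbb R^m$, $C\subset\mathbb R^n$, $Q\subset\mathbb R^m$, $Q^+:=Q-\mathbb R^m_+=\{y-u:y\in Q,u\in\mathbb R^m_+\}$; $P_S$ is Euclidean projection onto a nonempty closed convex set $S$. Let $z_i^*:=\inf_{x\in C}f_i(x)$, fix $r$ with $r_i>0$, $\sum r_i=1$. Define $\varphi(x):=\max_ir_i(f_i(x)-z_i^* )$, $H(x):=\tfrac12\mathrm{dist}^2(x,C)$, $G(x):=\tfrac12\mathrm{dist}^2(\mathcal F(x),Q^+)$, $\mathcal S:=\{x:H(x)=0,G(x)=0\}$, $\varphi^*:=\inf_{\mathcal S}\varphi$, $\Omega:=\{x\in\mathcal S:\varphi(x)=\varphi^*\}$,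 $\varphi_{\mathrm{lb}}:=\inf_C\varphi$. ABP algorithm: given $x^0$, $\mu>0$, positive sequences $\{\alpha_k\},\{\beta_k\},\{\gamma_k\},\{\lambda_k\}$: $p^k:=P_{Q^+}(\mathcal F(x^k))$, $\rho^k:=\mathcal F(x^k)-p^k$, $z^k:=x^k-P_C(x^k)$, $v^k:=J_{\mathcal F}(x^k)^T\rho^k$, $w^k:=r_{i^*}\nabla f_{i^*}(x^k)$ with arbitrary $i^*\in\arg\max_ir_i(f_i(x^k)-z_i^* )$, $\Delta_k:=\varphi(x^k)-\varphi_{\mathrm{lb}}$, $d^k:=\alpha_k\mathbf 1_{\{\Delta_k\ge0\}}w^k+\beta_kz^k+\gamma_kv^k$, $\eta_k:=\max(\mu,\|d^k\|)$, $x^{k+1}:=x^k-(\lambda_k/\eta_k)d^k$. *)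

theory Defs
  imports "HOL-Analysis.Analysis"
begin

definition Qplus :: "(real^'m) set \<Rightarrow> (real^'m) set" where
  "Qplus Q = {y - u | y u. y \<in> Q \<and> (\<forall>i. 0 \<le> u $ i)}"

text \<open>Euclidean projection onto Q^+ (onto its closure, which coincides with Q^+
  whenever Q^+ is closed, as tacitly assumed in the paper).\<close>
definition projQp :: "(real^'m) set \<Rightarrow> real^'m \<Rightarrow> real^'m" where
  "projQp Q y = closest_point (closure (Qplus Q)) y"

definition zstar :: "(real^'n \<Rightarrow> real^'m) \<Rightarrow> (real^'n) set \<Rightarrow> 'm \<Rightarrow> real" where
  "zstar F C i = Inf ((\<lambda>x. F x $ i) ` C)"

definition phi :: "(real^'n \<Rightarrow> real^'m) \<Rightarrow> (real^'n) set \<Rightarrow> real^'m \<Rightarrow> real^'n \<Rightarrow> real" where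
  "phi F C r x = Max (range (\<lambda>i. r $ i * (F x $ i - zstar F C i)))"

definition Hfun :: "(real^'n) set \<Rightarrow> real^'n \<Rightarrow> real" where
  "Hfun C x = (1/2) * (infdist x C)\<^sup>2"

definition Gfun :: "(real^'n \<Rightarrow> real^'m) \<Rightarrow> (real^'m) set \<Rightarrow> real^'n \<Rightarrow> real" where
  "Gfun F Q x = (1/2) * (infdist (F x) (Qplus Q))\<^sup>2"

definition feasS :: "(real^'n \<Rightarrow> real^'m) \<Rightarrow> (real^'n) set \<Rightarrow> (real^'m) set \<Rightarrow> (real^'n) set" where
  "feasS F C Q = {x. Hfun C x = 0 \<and> Gfun F Q x = 0}"

definition phistar where
  "phistar F C Q r = Inf (phi F C r ` feasS F C Q)"

definition Omega where
  "Omega F C Q r = {x \<in> feasS F C Q. phi F C r x = phistar F C Q r}"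

definition philb where
  "philb F C r = Inf (phi F C r ` C)"

text \<open>Direction d^k of the ABP algorithm at the point x, with step parameters
  a = alpha_k, b = beta_k, g = gamma_k and selected index i = i^*.
  grad j x is the gradient of f_j at x, so that J_F(x)^T rho = sum_j rho_j grad j x.\<close>
definition abp_d ::
  "(real^'n \<Rightarrow> real^'m) \<Rightarrow> ('m \<Rightarrow> real^'n \<Rightarrow> real^'n) \<Rightarrow> (real^'n) set \<Rightarrow> (real^'m) set
    \<Rightarrow> real^'m \<Rightarrow> real \<Rightarrow> real \<Rightarrow> real \<Rightarrow> 'm \<Rightarrow> real^'n \<Rightarrow> real^'n" where
  "abp_d F grad C Q r a b g i x =
    (let p = projQp Q (F x);
         rho = F x - p;
         z = x - closest_point C x;
         v = (\<Sum>j\<in>UNIV. (rho $ j) *\<^sub>R grad j x);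
         w = (r $ i) *\<^sub>R grad i x;
         \<Delta> = phi F C r x - philb F C r
     in (if \<Delta> \<ge> 0 then a else 0) *\<^sub>R w + b *\<^sub>R z + g *\<^sub>R v)"

end

theory Submission imports Defs begin

lemma grad_ineq:
  fixes f :: "'a::real_normed_vector \<Rightarrow> real" and g :: "'a \<Rightarrow> real"
  assumes cv: "convex_on UNIV f" and d: "(f has_derivative g) (at x)"
  shows "g (y - x) \<le> f y - f x"
proof -
  define G where "G t = f (x + t *\<^sub>R (y - x))" for t :: real
  have "convex_on UNIV G"
  proof (rule convex_onI)
    fix t s u :: real assume "0 < t" "t < 1"
    have "G ((1 - t) *\<^sub>R s + t *\<^sub>R u) = f ((1 - t) *\<^sub>R (x + s *\<^sub>R (y - x)) + t *\<^sub>R (x + u *\<^sub>R (y - x)))"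
      unfolding G_def by (simp add: algebra_simps)
    also have "\<dots> \<le> (1 - t) * G s + t * G u"
      unfolding G_def using convex_onD[OF cv, of t] \<open>0 < t\<close> \<open>t < 1\<close> by simp
    finally show "G ((1 - t) *\<^sub>R s + t *\<^sub>R u) \<le> (1 - t) * G s + t * G u" .
  qed simp
  moreover have "(G has_field_derivative g (y - x)) (at 0)"
  proof -
    have l: "((\<lambda>t. x + t *\<^sub>R (y - x)) has_derivative (\<lambda>t. t *\<^sub>R (y - x))) (at 0)"
      by (auto intro!: derivative_eq_intros)
    have "(G has_derivative (\<lambda>t. g (t *\<^sub>R (y - x)))) (at 0)"
      unfolding G_def using has_derivative_compose[OF l, of f g] d by simp
    moreover have "(\<lambda>t. g (t *\<^sub>R (y - x))) = (*) (g (y - x))"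
      using has_derivative_linear[OF d] by (auto simp: linear_scale fun_eq_iff)
    ultimately show ?thesis unfolding has_field_derivative_def by simp
  qed
  ultimately have "G 1 - G 0 \<ge> g (y - x) * (1 - 0)"
    by (intro convex_on_imp_above_tangent[of UNIV]) auto
  then show ?thesis unfolding G_def by simp
qed


lemma Qplus_convex: fixes Q :: "(real^'m) set" assumes "convex Q" shows "convex (Qplus Q)"
  unfolding convex_def Qplus_def
proof (clarify)
  fix y1 u1 y2 u2 :: "real^'m" and a b :: real
  assume h: "y1 \<in> Q" "\<forall>i. 0 \<le> u1 $ i" "y2 \<in> Q" "\<forall>i. 0 \<le> u2 $ i" "0 \<le> a" "0 \<le> b" "a + b = 1"
  have "a *\<^sub>R (y1 - u1) + b *\<^sub>R (y2 - u2) = (a *\<^sub>R y1 + b *\<^sub>R y2) - (a *\<^sub>R u1 + b *\<^sub>R u2)"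
    by (simp add: algebra_simps)
  moreover have "a *\<^sub>R y1 + b *\<^sub>R y2 \<in> Q" using assms h unfolding convex_def by blast
  moreover have "\<forall>i. 0 \<le> (a *\<^sub>R u1 + b *\<^sub>R u2) $ i" using h by simp
  ultimately show "\<exists>y u. a *\<^sub>R (y1 - u1) + b *\<^sub>R (y2 - u2) = y - u \<and> y \<in> Q \<and> (\<forall>i. 0 \<le> u $ i)"
    by blast
qed

lemma Qplus_ne: assumes "Q \<noteq> {}" shows "Qplus Q \<noteq> {}"
proof -
  obtain q where "q \<in> Q" using assms by blast
  then have "q - 0 \<in> Qplus Q" unfolding Qplus_def by fastforce
  then show ?thesis by blast
qed

lemma Qplus_shift:
  assumes "s \<in> closure (Qplus Q)" "\<forall>i. 0 \<le> u $ i"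
  shows "s - u \<in> closure (Qplus Q)"
proof -
  have sub: "(+) (-u) ` Qplus Q \<subseteq> Qplus Q"
  proof
    fix z assume "z \<in> (+) (-u) ` Qplus Q"
    then obtain y v where "y \<in> Q" "\<forall>i. 0 \<le> v $ i" "z = -u + (y - v)" unfolding Qplus_def by auto
    then have "z = y - (v + u)" "\<forall>i. 0 \<le> (v + u) $ i" using assms(2) by (auto simp: algebra_simps)
    then show "z \<in> Qplus Q" unfolding Qplus_def using \<open>y \<in> Q\<close> by blast
  qed
  have "-u + s \<in> (+) (-u) ` closure (Qplus Q)" using assms(1) by blast
  also have "\<dots> = closure ((+) (-u) ` Qplus Q)" using closure_translation[of "-u" "Qplus Q"] by simp
  also have "\<dots> \<subseteq> closure (Qplus Q)" using sub by (rule closure_mono)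
  finally show ?thesis by simp
qed

lemma rho_nonneg:
  assumes "convex Q" "Q \<noteq> {}"
  shows "0 \<le> (y - projQp Q y) $ j"
proof -
  let ?S = "closure (Qplus Q)"
  have S: "convex ?S" "closed ?S" "?S \<noteq> {}"
    using Qplus_convex[OF assms(1)] Qplus_ne[OF assms(2)] by (auto simp: convex_closure)
  have p: "projQp Q y \<in> ?S" unfolding projQp_def using S closest_point_in_set by blast
  have "projQp Q y - axis j 1 \<in> ?S"
    by (rule Qplus_shift[OF p]) (simp add: axis_def)
  from closest_point_dot[OF S(1,2) this, of y]
  have "inner (y - projQp Q y) (- axis j 1) \<le> 0" unfolding projQp_def by simp
  then show ?thesis by (simp add: inner_axis)
qed


lemma phi_ge:
  fixes F :: "real^'n \<Rightarrow> real^'m"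
  shows "r $ i * (F y $ i - zstar F C i) \<le> phi F C r y"
  unfolding phi_def by (rule Max_ge) auto

lemma inner_nonneg:
  fixes F :: "real^'n \<Rightarrow> real^'m"
    and grad :: "'m \<Rightarrow> real^'n \<Rightarrow> real^'n"
  assumes r_pos: "\<forall>i. r $ i > 0"
    and A1_deriv: "\<forall>i y. ((\<lambda>y. F y $ i) has_derivative (\<lambda>h. grad i y \<bullet> h)) (at y)"
    and C: "C \<noteq> {}" "closed C" "convex C"
    and Q: "Q \<noteq> {}" "convex Q"
    and A3: "\<forall>i. convex_on UNIV (\<lambda>y. F y $ i)"
    and xsC: "xs \<in> C" and xsQ: "F xs \<in> closure (Qplus Q)"
    and xsphi: "phi F C r xs \<le> philb F C r"
    and abg: "0 \<le> a" "0 \<le> b" "0 \<le> g"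
    and ist: "r $ i * (F y $ i - zstar F C i) = phi F C r y"
  shows "0 \<le> inner (abp_d F grad C Q r a b g i y) (y - xs)"
proof -
  have gi: "F y $ j - F xs $ j \<le> inner (grad j y) (y - xs)" for j
  proof -
    have "(\<lambda>h. grad j y \<bullet> h) (xs - y) \<le> F xs $ j - F y $ j"
      by (rule grad_ineq[of "\<lambda>y. F y $ j"]) (use A3 A1_deriv in auto)
    then show ?thesis by (simp add: inner_diff_right)
  qed
  define p where "p = projQp Q (F y)"
  define rho where "rho = F y - p"
  define z where "z = y - closest_point C y"
  define v where "v = (\<Sum>j\<in>UNIV. (rho $ j) *\<^sub>R grad j y)"
  define w where "w = (r $ i) *\<^sub>R grad i y"
  define ca where "ca = (if phi F C r y - philb F C r \<ge> 0 then a else 0)"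
  have d: "abp_d F grad C Q r a b g i y = ca *\<^sub>R w + b *\<^sub>R z + g *\<^sub>R v"
    unfolding abp_d_def Let_def p_def rho_def z_def v_def w_def ca_def by simp
  have t1: "0 \<le> ca * inner w (y - xs)"
  proof (cases "phi F C r y - philb F C r \<ge> 0")
    case True
    have "r $ i * (F xs $ i - zstar F C i) \<le> phi F C r xs" by (rule phi_ge)
    then have "0 \<le> r $ i * (F y $ i - F xs $ i)" using True ist xsphi by (simp add: algebra_simps)
    also have "\<dots> \<le> r $ i * inner (grad i y) (y - xs)"
      using gi[of i] r_pos by (intro mult_left_mono) (auto simp: less_imp_le)
    finally show ?thesis unfolding ca_def w_def using True abg by simp
  next
    case False then show ?thesis unfolding ca_def by simp
  qed
  have t2: "0 \<le> inner z (y - xs)"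
  proof -
    have "inner (y - closest_point C y) (xs - closest_point C y) \<le> 0"
      by (rule closest_point_dot[OF C(3,2) xsC])
    moreover have "y - xs = z - (xs - closest_point C y)" unfolding z_def by simp
    ultimately have "inner z (y - xs) = inner z z - inner z (xs - closest_point C y)"
      "inner z (xs - closest_point C y) \<le> 0"
      by (simp_all add: inner_diff_right z_def)
    then show ?thesis using inner_ge_zero[of z] by linarith
  qed
  have t3: "0 \<le> inner v (y - xs)"
  proof -
    have rn: "0 \<le> rho $ j" for j unfolding rho_def p_def by (rule rho_nonneg[OF Q(2,1)])
    have "inner rho (p - F xs) \<ge> 0"
    proof -
      let ?S = "closure (Qplus Q)"
      have S: "convex ?S" "closed ?S"
        using Qplus_convex[OF Q(2)] by (auto simp: convex_closure)
      from closest_point_dot[OF S xsQ, of "F y"]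
      have "inner rho (F xs - p) \<le> 0" unfolding rho_def p_def projQp_def by simp
      then show ?thesis by (simp add: inner_diff_right)
    qed
    then have "0 \<le> inner rho rho + inner rho (p - F xs)" by simp
    also have "\<dots> = inner rho (F y - F xs)" unfolding rho_def by (simp add: inner_diff_right inner_diff_left)
    also have "\<dots> = (\<Sum>j\<in>UNIV. rho $ j * (F y $ j - F xs $ j))" by (simp add: inner_vec_def)
    also have "\<dots> \<le> (\<Sum>j\<in>UNIV. rho $ j * inner (grad j y) (y - xs))"
      by (intro sum_mono mult_left_mono gi rn)
    also have "\<dots> = inner v (y - xs)" unfolding v_def by (simp add: inner_sum_left)
    finally show ?thesis .
  qed
  show ?thesis unfolding d using t1 t2 t3 abg
    by (simp add: inner_add_left)
qed


lemma sqexp: "norm (a - t *\<^sub>R d)^2 = norm a^2 - 2 * t * inner d a + (t * norm d)^2"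
  for a d :: "'a::real_inner"
proof -
  have "norm (a - t *\<^sub>R d)^2 = inner (a - t *\<^sub>R d) (a - t *\<^sub>R d)" by (simp add: power2_norm_eq_inner)
  also have "\<dots> = inner a a - 2 * t * inner d a + t^2 * inner d d"
    by (simp add: inner_diff_left inner_diff_right inner_commute algebra_simps power2_eq_square)
  also have "\<dots> = norm a^2 - 2 * t * inner d a + (t * norm d)^2"
    by (simp add: power2_norm_eq_inner power_mult_distrib)
  finally show ?thesis .
qed

lemma norm_d_le:
  fixes F :: "real^'n \<Rightarrow> real^'m"
    and grad :: "'m \<Rightarrow> real^'n \<Rightarrow> real^'n"
  assumes "0 \<le> r $ i" "r $ i \<le> 1" "0 \<le> a" "a \<le> ah" "0 \<le> b" "b \<le> bh" "0 \<le> g" "g \<le> gh"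
  shows "norm (abp_d F grad C Q r a b g i y) \<le> (ah + bh + gh) *
     (norm (y - closest_point C y) + norm (F y - projQp Q (F y)) * (\<Sum>j\<in>UNIV. norm (grad j y))
      + (\<Sum>j\<in>UNIV. norm (grad j y)))"
proof -
  define p where "p = projQp Q (F y)"
  define rho where "rho = F y - p"
  define z where "z = y - closest_point C y"
  define v where "v = (\<Sum>j\<in>UNIV. (rho $ j) *\<^sub>R grad j y)"
  define w where "w = (r $ i) *\<^sub>R grad i y"
  define ca where "ca = (if phi F C r y - philb F C r \<ge> 0 then a else 0)"
  define SG where "SG = (\<Sum>j\<in>UNIV. norm (grad j y))"
  have d: "abp_d F grad C Q r a b g i y = ca *\<^sub>R w + b *\<^sub>R z + g *\<^sub>R v"
    unfolding abp_d_def Let_def p_def rho_def z_def v_def w_def ca_def by simp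
  have SG0: "0 \<le> SG" unfolding SG_def by (simp add: sum_nonneg)
  have gi: "norm (grad i y) \<le> SG" unfolding SG_def
    by (rule member_le_sum) auto
  have nw: "norm w \<le> SG" unfolding w_def using assms(1,2) gi
    by (simp add: abs_of_nonneg) (meson dual_order.trans mult_left_le_one_le norm_ge_zero)
  have nv: "norm v \<le> norm rho * SG"
  proof -
    have "norm v \<le> (\<Sum>j\<in>UNIV. norm ((rho $ j) *\<^sub>R grad j y))" unfolding v_def by (rule norm_sum)
    also have "\<dots> \<le> (\<Sum>j\<in>UNIV. norm rho * norm (grad j y))"
      by (intro sum_mono) (simp add: component_le_norm_cart mult_right_mono)
    finally show ?thesis unfolding SG_def by (simp add: sum_distrib_left)
  qed
  have ca: "0 \<le> ca" "ca \<le> ah" unfolding ca_def using assms by auto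
  have e1: "norm (ca *\<^sub>R w) = ca * norm w" using ca(1) by simp
  have e2: "norm (b *\<^sub>R z) = b * norm z" using assms(5) by simp
  have e3: "norm (g *\<^sub>R v) = g * norm v" using assms(7) by simp
  have m1: "ca * norm w \<le> ah * SG" by (rule mult_mono) (use ca nw SG0 in auto)
  have m2: "b * norm z \<le> bh * norm z" by (rule mult_right_mono) (use assms in auto)
  have m3: "g * norm v \<le> gh * (norm rho * SG)" by (rule mult_mono) (use assms nv in auto)
  have tri: "norm (ca *\<^sub>R w + b *\<^sub>R z + g *\<^sub>R v) \<le> norm (ca *\<^sub>R w) + norm (b *\<^sub>R z) + norm (g *\<^sub>R v)"
    by (rule order_trans[OF norm_triangle_ineq add_right_mono[OF norm_triangle_ineq]])
  have nz: "0 \<le> norm z" "0 \<le> norm rho * SG" using SG0 by auto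
  have p1: "0 \<le> ah * (norm z + norm rho * SG)" using assms nz by (intro mult_nonneg_nonneg) linarith+
  have p2: "0 \<le> bh * (norm rho * SG + SG)" using assms nz SG0 by (intro mult_nonneg_nonneg) linarith+
  have p3: "0 \<le> gh * (norm z + SG)" using assms nz SG0 by (intro mult_nonneg_nonneg) linarith+
  have eq: "(ah + bh + gh) * (norm z + norm rho * SG + SG) =
     ah * SG + bh * norm z + gh * (norm rho * SG)
     + (ah * (norm z + norm rho * SG) + bh * (norm rho * SG + SG) + gh * (norm z + SG))"
    by (simp add: algebra_simps)
  have "norm (abp_d F grad C Q r a b g i y) \<le> (ah + bh + gh) * (norm z + norm rho * SG + SG)"
    unfolding d eq using tri e1 e2 e3 m1 m2 m3 p1 p2 p3 by linarith
  then show ?thesis unfolding z_def rho_def p_def SG_def .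
qed

theorem lemma12:
  fixes F :: "real^'n \<Rightarrow> real^'m"
    and grad :: "'m \<Rightarrow> real^'n \<Rightarrow> real^'n"
    and C :: "(real^'n) set" and Q :: "(real^'m) set"
    and r :: "real^'m" and mu :: real
    and x :: "nat \<Rightarrow> real^'n" and istar :: "nat \<Rightarrow> 'm"
    and alpha beta gamma lam :: "nat \<Rightarrow> real"
    and alo ahi blo bhi glo ghi :: real
  assumes r_pos: "\<forall>i. r $ i > 0" and r_sum: "(\<Sum>i\<in>UNIV. r $ i) = 1"
    and mu_pos: "mu > 0"
    and A1_deriv: "\<forall>i y. ((\<lambda>y. F y $ i) has_derivative (\<lambda>h. grad i y \<bullet> h)) (at y)"
    and A1_cont: "\<forall>i. continuous_on UNIV (grad i)"
    and A2_C: "C \<noteq> {}" "closed C" "convex C"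
    and A2_Q: "Q \<noteq> {}" "closed Q" "convex Q"
    and A2_z: "\<forall>i. bdd_below ((\<lambda>y. F y $ i) ` C)"
    and A3: "\<forall>i. convex_on UNIV (\<lambda>y. F y $ i)"
    and A4: "Omega F C Q r \<noteq> {}"
    and A5: "\<forall>k. lam k > 0" "\<not> summable lam" "summable (\<lambda>k. (lam k)\<^sup>2)"
    and A6: "0 < alo" "\<forall>k. alo \<le> alpha k \<and> alpha k \<le> ahi"
            "0 < blo" "\<forall>k. blo \<le> beta k \<and> beta k \<le> bhi"
            "0 < glo" "\<forall>k. glo \<le> gamma k \<and> gamma k \<le> ghi"
    and A7: "philb F C r = phistar F C Q r"
    and istar: "\<forall>k. r $ istar k * (F (x k) $ istar k - zstar F C (istar k)) = phi F C r (x k)"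
    and iter: "\<forall>k. x (Suc k) = x k - (lam k / max mu (norm (abp_d F grad C Q r (alpha k) (beta k) (gamma k) (istar k) (x k))))
                   *\<^sub>R abp_d F grad C Q r (alpha k) (beta k) (gamma k) (istar k) (x k)"
  shows "\<exists>M. (\<forall>k. norm (abp_d F grad C Q r (alpha k) (beta k) (gamma k) (istar k) (x k)) \<le> M) \<and>
             (\<forall>k. mu \<le> max mu (norm (abp_d F grad C Q r (alpha k) (beta k) (gamma k) (istar k) (x k))) \<and>
                  max mu (norm (abp_d F grad C Q r (alpha k) (beta k) (gamma k) (istar k) (x k))) \<le> max mu M)"
proof -
  define dk where "dk k = abp_d F grad C Q r (alpha k) (beta k) (gamma k) (istar k) (x k)" for k
  obtain xs where xs: "xs \<in> Omega F C Q r" using A4 by blast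
  have "Hfun C xs = 0" "Gfun F Q xs = 0" "phi F C r xs = phistar F C Q r"
    using xs unfolding Omega_def feasS_def by auto
  then have "infdist xs C = 0" "infdist (F xs) (Qplus Q) = 0" and xsphi: "phi F C r xs \<le> philb F C r"
    unfolding Hfun_def Gfun_def using A7 by auto
  then have xsC: "xs \<in> C" and xsQ: "F xs \<in> closure (Qplus Q)"
    using in_closure_iff_infdist_zero[OF A2_C(1)] in_closure_iff_infdist_zero[OF Qplus_ne[OF A2_Q(1)]]
      closure_closed[OF A2_C(2)] by auto
  have ab0: "0 \<le> alpha k" "alpha k \<le> ahi" "0 \<le> beta k" "beta k \<le> bhi" "0 \<le> gamma k" "gamma k \<le> ghi" for k
    using A6(1) A6(2)[rule_format, of k] A6(3) A6(4)[rule_format, of k] A6(5) A6(6)[rule_format, of k]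
    by linarith+
  have inn: "0 \<le> inner (dk k) (x k - xs)" for k
    unfolding dk_def
    by (rule inner_nonneg[OF r_pos A1_deriv A2_C A2_Q(1) A2_Q(3) A3 xsC xsQ xsphi])
       (use ab0 istar in auto)
  have fe: "norm (x k - xs)^2 \<le> norm (x 0 - xs)^2 + (\<Sum>i<k. (lam i)^2)" for k
  proof (induction k)
    case 0 then show ?case by simp
  next
    case (Suc k)
    define t where "t = lam k / max mu (norm (dk k))"
    have xs1: "x (Suc k) - xs = (x k - xs) - t *\<^sub>R dk k" using iter unfolding t_def dk_def by simp
    have t0: "0 \<le> t" unfolding t_def using A5(1) mu_pos by (simp add: less_imp_le)
    have tl: "t * norm (dk k) \<le> lam k"
    proof -
      have "t * norm (dk k) = lam k * (norm (dk k) / max mu (norm (dk k)))" unfolding t_def by simp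
      also have "\<dots> \<le> lam k * 1"
        using A5(1) mu_pos by (intro mult_left_mono) (auto simp: less_imp_le divide_le_eq_1)
      finally show ?thesis by simp
    qed
    have "norm (x (Suc k) - xs)^2 = norm (x k - xs)^2 - 2 * t * inner (dk k) (x k - xs) + (t * norm (dk k))^2"
      unfolding xs1 by (rule sqexp)
    also have "\<dots> \<le> norm (x k - xs)^2 + (lam k)^2"
    proof -
      have "0 \<le> t * inner (dk k) (x k - xs)" using t0 inn[of k] by simp
      moreover have "(t * norm (dk k))^2 \<le> (lam k)^2" using tl t0 by (intro power_mono) auto
      ultimately show ?thesis by linarith
    qed
    finally show ?case using Suc.IH by simp
  qed
  define R where "R = sqrt (norm (x 0 - xs)^2 + suminf (\<lambda>k. (lam k)^2))"
  have inK: "x k \<in> cball xs R" for k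
  proof -
    have "(\<Sum>i<k. (lam i)^2) \<le> suminf (\<lambda>k. (lam k)^2)"
      by (rule sum_le_suminf[OF A5(3)]) auto
    then have "norm (x k - xs)^2 \<le> R^2" unfolding R_def using fe[of k]
      by (simp add: add_nonneg_nonneg suminf_nonneg[OF A5(3)])
    then have "norm (x k - xs) \<le> R" unfolding R_def
      by (rule power2_le_imp_le[OF _ real_sqrt_ge_zero]) (simp_all add: add_nonneg_nonneg suminf_nonneg[OF A5(3)])
    then show ?thesis by (simp add: dist_norm norm_minus_commute)
  qed
  have cF: "continuous_on UNIV F"
  proof -
    have "continuous_on UNIV (\<lambda>y. F y $ i)" for i
      using A1_deriv by (meson continuous_at_imp_continuous_on has_derivative_continuous)
    then have "continuous_on UNIV (\<lambda>y. \<chi> i. F y $ i)" by (intro continuous_on_vec_lambda)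
    then show ?thesis by simp
  qed
  let ?S = "closure (Qplus Q)"
  have S: "convex ?S" "closed ?S" "?S \<noteq> {}"
    using Qplus_convex[OF A2_Q(3)] Qplus_ne[OF A2_Q(1)] by (auto simp: convex_closure)
  have cP: "continuous_on UNIV (\<lambda>y. projQp Q (F y))"
    unfolding projQp_def by (rule continuous_on_compose2[OF continuous_on_closest_point[OF S] cF]) auto
  have cC: "continuous_on UNIV (closest_point C)"
    by (rule continuous_on_closest_point[OF A2_C(3,2,1)])
  define h where "h y = norm (y - closest_point C y) + norm (F y - projQp Q (F y)) * (\<Sum>j\<in>UNIV. norm (grad j y))
      + (\<Sum>j\<in>UNIV. norm (grad j y))" for y
  have "continuous_on UNIV h"
    unfolding h_def using cF cP cC A1_cont
    by (intro continuous_intros) auto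
  then have ch: "continuous_on (cball xs R) h"
    by (rule continuous_on_subset) simp
  have "R \<ge> 0" unfolding R_def by (simp add: add_nonneg_nonneg suminf_nonneg[OF A5(3)])
  then obtain y0 where "y0 \<in> cball xs R" and B: "\<forall>y\<in>cball xs R. h y \<le> h y0"
    using continuous_attains_sup[OF compact_cball _ ch] by auto
  have rle: "0 \<le> r $ i \<and> r $ i \<le> 1" for i
  proof -
    have "r $ i \<le> (\<Sum>i\<in>UNIV. r $ i)" by (rule member_le_sum) (use r_pos in \<open>auto intro: less_imp_le\<close>)
    then show ?thesis using r_sum r_pos by (simp add: less_imp_le)
  qed
  define M where "M = (ahi + bhi + ghi) * h y0"
  have c0: "0 \<le> ahi + bhi + ghi" using ab0[of 0] by linarith
  have dM: "norm (dk k) \<le> M" for k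
  proof -
    have "norm (dk k) \<le> (ahi + bhi + ghi) * h (x k)"
      unfolding dk_def h_def
      by (rule norm_d_le) (use rle ab0 in auto)
    also have "\<dots> \<le> M" unfolding M_def using B inK c0 by (intro mult_left_mono) auto
    finally show ?thesis .
  qed
  show ?thesis
    by (rule exI[of _ M]) (use dM in \<open>auto simp: dk_def intro: le_max_iff_disj[THEN iffD2] dest: spec\<close>)
qed

end
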